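(* Let $\beta_\bullet\in\{\beta,\beta_v\}$, let $\to_{\beta_\bullet}$ be the contextual closure of the rule $\beta_\bullet$ on $\Lambda_{\mathcal O}$, and let $\rightsquigarrow_U$ be the unbiased iteration of an associated surface reduction (as defined in the context). Then: 1. $\rightsquigarrow_U$ is RD-diamond: whenever $M_1\leftsquigarrow_U M\rightsquigarrow_U M_2$, either $M_1=M_2$ or there is $P$ with $M_1\rightsquigarrow_UP$ and $M_2\rightsquigarrow_UP$. 2. $\rightsquigarrow_U$ has the same normal forms as $\to_{\beta_\bullet}$. 3. If $N$ is $\beta_\bullet$-normal and $M\to_{\beta_\bullet}^*N$, then $M\rightsquigarrow_U^*N$.
   Context: Terms: $M::=x\mid\lambda x.M\mid MM\mid \mathsf{op}(M,\dots,M)$ where $\mathsf{op}$ ranges over a (possibly empty) set $\mathcal O$ of operator symbols with fixed arities, up to renaming of bound variables; this set is $\Lambda_{\mathcal O}$. Values: $V::=x\mid\lambda x.M$. Contexts: $C::=[\,]\mid MC\mid CM\mid\lambda x.C\mid\mathsf{op}(M,\dots,C,\dots,M)$. Rules: $(\lambda x.M)N\mapsto_\beta M\{N/x\}$; $(\lambda x.M)V\mapsto_{\beta_v}M\{V/x\}$ for $V$ a value. $\to_{\beta_\bullet}$ is the closure of the rule under all contexts. Head contexts $H::=[\,]\mid\lambda x.H\mid HM$; weak $W::=[\,]\mid WM\mid MW$; left $L::=[\,]\mid LM\mid VL$; right $R::=[\,]\mid MR\mid RV$. Surface reduction $\to_s$: for $\beta$, the closure of $\beta$ under head contexts; for $\beta_v$,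 the closure of $\beta_v$ under weak, or left, or right contexts (any one choice). $\rightsquigarrow_U\subseteq\to_{\beta_\bullet}$ is defined inductively: if $M\to_sM'$ then $M\rightsquigarrow_UM'$; if $M$ is $\to_s$-normal, $M\rightsquigarrow_UM'$ is given by: $\lambda x.P\rightsquigarrow_U\lambda x.P'$ if $P\rightsquigarrow_UP'$; $PQ\rightsquigarrow_UP'Q$ if $P\rightsquigarrow_UP'$; $PQ\rightsquigarrow_UPQ'$ if $Q\rightsquigarrow_UQ'$; $\mathsf{op}(\dots,P_i,\dots)\rightsquigarrow_U\mathsf{op}(\dots,P_i',\dots)$ if $P_i\rightsquigarrow_UP_i'$. *)

theory Defs
  imports Main
begin

(* Lambda terms with operators, in de Bruijn representation (terms up to alpha). *)
datatype 'o trm = Var nat | Lam "'o trm" | App "'o trm" "'o trm" | Op 'o "'o trm list"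

fun wf :: "('o \<Rightarrow> nat) \<Rightarrow> 'o trm \<Rightarrow> bool" where
  "wf ar (Var i) = True"
| "wf ar (Lam t) = wf ar t"
| "wf ar (App s t) = (wf ar s \<and> wf ar t)"
| "wf ar (Op f ts) = (length ts = ar f \<and> (\<forall>t\<in>set ts. wf ar t))"

fun lift :: "nat \<Rightarrow> 'o trm \<Rightarrow> 'o trm" where
  "lift k (Var i) = (if i < k then Var i else Var (Suc i))"
| "lift k (Lam t) = Lam (lift (Suc k) t)"
| "lift k (App s t) = App (lift k s) (lift k t)"
| "lift k (Op f ts) = Op f (map (lift k) ts)"

(* subst t k s = t{s/k}, removing the binder k *)
fun subst :: "'o trm \<Rightarrow> nat \<Rightarrow> 'o trm \<Rightarrow> 'o trm" where
  "subst (Var i) k s = (if i < k then Var i else if i = k then s else Var (i - 1))"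
| "subst (Lam t) k s = Lam (subst t (Suc k) (lift 0 s))"
| "subst (App t u) k s = App (subst t k s) (subst u k s)"
| "subst (Op f ts) k s = Op f (map (\<lambda>t. subst t k s) ts)"

fun is_val :: "'o trm \<Rightarrow> bool" where
  "is_val (Var _) = True"
| "is_val (Lam _) = True"
| "is_val _ = False"

(* The calculi: call-by-name beta with head surface reduction, or call-by-value beta_v
   with weak / left / right surface reduction. *)
datatype calc = CbnHead | CbvWeak | CbvLeft | CbvRight

fun is_cbv :: "calc \<Rightarrow> bool" where
  "is_cbv CbnHead = False"
| "is_cbv _ = True"

inductive rootstep :: "calc \<Rightarrow> 'o trm \<Rightarrow> 'o trm \<Rightarrow> bool" for c where
  beta: "\<not> is_cbv c \<Longrightarrow> rootstep c (App (Lam t) s) (subst t 0 s)"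
| betav: "is_cbv c \<Longrightarrow> is_val v \<Longrightarrow> rootstep c (App (Lam t) v) (subst t 0 v)"

inductive step :: "calc \<Rightarrow> 'o trm \<Rightarrow> 'o trm \<Rightarrow> bool" for c where
  root: "rootstep c M N \<Longrightarrow> step c M N"
| appL: "step c M M' \<Longrightarrow> step c (App M N) (App M' N)"
| appR: "step c N N' \<Longrightarrow> step c (App M N) (App M N')"
| lam: "step c M M' \<Longrightarrow> step c (Lam M) (Lam M')"
| op: "step c M M' \<Longrightarrow> step c (Op f (xs @ M # ys)) (Op f (xs @ M' # ys))"

inductive sred :: "calc \<Rightarrow> 'o trm \<Rightarrow> 'o trm \<Rightarrow> bool" for c where
  root: "rootstep c M N \<Longrightarrow> sred c M N"
| head_lam: "c = CbnHead \<Longrightarrow> sred c M M' \<Longrightarrow> sred c (Lam M) (Lam M')"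
| head_app: "c = CbnHead \<Longrightarrow> sred c M M' \<Longrightarrow> sred c (App M N) (App M' N)"
| weak_l: "c = CbvWeak \<Longrightarrow> sred c M M' \<Longrightarrow> sred c (App M N) (App M' N)"
| weak_r: "c = CbvWeak \<Longrightarrow> sred c N N' \<Longrightarrow> sred c (App M N) (App M N')"
| left_l: "c = CbvLeft \<Longrightarrow> sred c M M' \<Longrightarrow> sred c (App M N) (App M' N)"
| left_r: "c = CbvLeft \<Longrightarrow> is_val V \<Longrightarrow> sred c N N' \<Longrightarrow> sred c (App V N) (App V N')"
| right_r: "c = CbvRight \<Longrightarrow> sred c N N' \<Longrightarrow> sred c (App M N) (App M N')"
| right_l: "c = CbvRight \<Longrightarrow> is_val V \<Longrightarrow> sred c M M' \<Longrightarrow> sred c (App M V) (App M' V)"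

definition snormal :: "calc \<Rightarrow> 'o trm \<Rightarrow> bool" where
  "snormal c M \<longleftrightarrow> (\<nexists>N. sred c M N)"

inductive ured :: "calc \<Rightarrow> 'o trm \<Rightarrow> 'o trm \<Rightarrow> bool" for c where
  surf: "sred c M M' \<Longrightarrow> ured c M M'"
| lam: "snormal c (Lam P) \<Longrightarrow> ured c P P' \<Longrightarrow> ured c (Lam P) (Lam P')"
| appL: "snormal c (App P Q) \<Longrightarrow> ured c P P' \<Longrightarrow> ured c (App P Q) (App P' Q)"
| appR: "snormal c (App P Q) \<Longrightarrow> ured c Q Q' \<Longrightarrow> ured c (App P Q) (App P Q')"
| op: "snormal c (Op f (xs @ P # ys)) \<Longrightarrow> ured c P P'
       \<Longrightarrow> ured c (Op f (xs @ P # ys)) (Op f (xs @ P' # ys))"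

end

theory Submission
  imports Defs
begin

lemma lift_lift:
  "i < k + 1 \<Longrightarrow> lift (Suc k) (lift i t) = lift i (lift k t)"
  by (induct t arbitrary: i k) auto

lemma lift_subst [simp]:
  "j < i + 1 \<Longrightarrow> lift i (subst t j s) = subst (lift (i + 1) t) j (lift i s)"
  by (induct t arbitrary: i j s) (auto simp: diff_Suc lift_lift split: nat.split)

lemma lift_subst_lt:
  "i < j + 1 \<Longrightarrow> lift i (subst t j s) = subst (lift i t) (j + 1) (lift i s)"
  by (induct t arbitrary: i j s) (auto simp: lift_lift)

lemma subst_lift [simp]: "subst (lift k t) k s = t"
  by (induct t arbitrary: k s) (auto simp: map_idI)

lemma subst_subst:
  "i < j + 1 \<Longrightarrow> subst (subst t (Suc j) (lift i v)) i (subst u j v) = subst (subst t i u) j v"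
  by (induct t arbitrary: i j u v)
    (auto simp: diff_Suc lift_lift [symmetric] lift_subst_lt split: nat.split)

fun knd :: "'o trm \<Rightarrow> nat" where
  "knd (Var _) = 0" | "knd (Lam _) = 1" | "knd (App _ _) = 2" | "knd (Op _ _) = 3"

lemma is_val_knd: "is_val M \<longleftrightarrow> knd M \<le> 1"
  by (cases M) auto

lemma is_val_lift[simp]: "is_val (lift k v) = is_val v"
  by (cases v) auto

lemma is_val_subst[simp]: "is_val s \<Longrightarrow> is_val (subst v k s) = is_val v"
  by (cases v) auto

lemma rootstep_iff: "rootstep c M N \<longleftrightarrow> (\<exists>t s. M = App (Lam t) s \<and> N = subst t 0 s \<and> (is_cbv c \<longrightarrow> is_val s))"
  by (auto elim: rootstep.cases intro: rootstep.intros)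

lemma sred_Var[simp]: "\<not> sred c (Var i) N"
  by (auto elim: sred.cases simp: rootstep_iff)
lemma sred_Op[simp]: "\<not> sred c (Op f ts) N"
  by (auto elim: sred.cases simp: rootstep_iff)
lemma sred_Lam: "sred c (Lam t) N \<longleftrightarrow> c = CbnHead \<and> (\<exists>t'. N = Lam t' \<and> sred c t t')"
  by (auto elim: sred.cases intro: sred.intros simp: rootstep_iff)

lemma sred_val: "is_cbv c \<Longrightarrow> is_val v \<Longrightarrow> \<not> sred c v N"
  by (cases v) (auto simp: sred_Lam)

inductive_cases sred_AppE: "sred c (App s t) N"

lemma snormal_Var[simp]: "snormal c (Var i)" by (simp add: snormal_def)
lemma snormal_Op[simp]: "snormal c (Op f ts)" by (simp add: snormal_def)
lemma snormal_Lam[simp]: "snormal c (Lam t) \<longleftrightarrow> (c = CbnHead \<longrightarrow> snormal c t)"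
  by (auto simp: snormal_def sred_Lam)

lemma snormal_App:
  "snormal c (App s t) \<longleftrightarrow> \<not>(knd s = 1 \<and> (is_cbv c \<longrightarrow> is_val t))
     \<and> (c = CbnHead \<longrightarrow> snormal c s)
     \<and> (c = CbvWeak \<longrightarrow> snormal c s \<and> snormal c t)
     \<and> (c = CbvLeft \<longrightarrow> snormal c s \<and> (is_val s \<longrightarrow> snormal c t))
     \<and> (c = CbvRight \<longrightarrow> snormal c t \<and> (is_val t \<longrightarrow> snormal c s))"
  (is "?L = ?R")
proof
  assume L: ?L
  have nr: "\<not>(knd s = 1 \<and> (is_cbv c \<longrightarrow> is_val t))"
  proof
    assume "knd s = 1 \<and> (is_cbv c \<longrightarrow> is_val t)"
    then obtain u where "s = Lam u" "is_cbv c \<longrightarrow> is_val t" by (cases s) auto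
    then have "sred c (App s t) (subst u 0 t)" by (auto intro: sred.root simp: rootstep_iff)
    with L show False by (auto simp: snormal_def)
  qed
  have a: "sred c s s' \<Longrightarrow> c \<noteq> CbvRight \<Longrightarrow> False" for s'
    using L by (cases c) (auto simp: snormal_def intro: sred.intros)
  have a2: "sred c s s' \<Longrightarrow> is_val t \<Longrightarrow> False" for s'
    using L a by (cases c) (auto simp: snormal_def intro: sred.intros)
  have b: "sred c t t' \<Longrightarrow> c \<noteq> CbnHead \<Longrightarrow> c \<noteq> CbvLeft \<Longrightarrow> False" for t'
    using L by (cases c) (auto simp: snormal_def intro: sred.intros)
  have b2: "sred c t t' \<Longrightarrow> is_val s \<Longrightarrow> c \<noteq> CbnHead \<Longrightarrow> False" for t'
    using L b by (cases c) (auto simp: snormal_def intro: sred.intros)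
  show ?R using nr a a2 b b2 unfolding snormal_def by (cases c) auto
next
  assume R: ?R
  show ?L unfolding snormal_def
  proof
    assume "\<exists>N. sred c (App s t) N"
    then obtain N where "sred c (App s t) N" by blast
    then show False
      using R by (cases rule: sred_AppE) (auto simp: snormal_def rootstep_iff)
  qed
qed

lemma sred_lift: "sred c t t' \<Longrightarrow> sred c (lift k t) (lift k t')"
proof (induction arbitrary: k rule: sred.induct)
  case (root M N)
  then show ?case by (auto simp: rootstep_iff intro!: sred.root)
qed (auto intro: sred.intros)

lemma sred_subst: "sred c t t' \<Longrightarrow> (\<not> is_cbv c \<or> is_val s) \<Longrightarrow> sred c (subst t k s) (subst t' k s)"
proof (induction arbitrary: k s rule: sred.induct)
  case (root M N)
  then obtain a b where "M = App (Lam a) b" "N = subst a 0 b" "is_cbv c \<longrightarrow> is_val b" by (auto simp: rootstep_iff)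
  moreover have "subst (subst a 0 b) k s = subst (subst a (Suc k) (lift 0 s)) 0 (subst b k s)"
    using subst_subst[of 0 k a s b] by simp
  ultimately show ?case using root by (auto simp: rootstep_iff intro!: sred.root)
qed (auto intro: sred.intros)

lemma sred_diamond: "sred c M M1 \<Longrightarrow> sred c M M2 \<Longrightarrow> M1 = M2 \<or> (\<exists>P. sred c M1 P \<and> sred c M2 P)"
proof (induction arbitrary: M2 rule: sred.induct)
  case (root M N)
  then obtain t s where MN: "M = App (Lam t) s" "N = subst t 0 s" "is_cbv c \<longrightarrow> is_val s"
    by (auto simp: rootstep_iff)
  from root.prems[unfolded MN] show ?case
    apply (cases rule: sred_AppE)
    using MN apply (auto simp: rootstep_iff sred_Lam sred_val)
    apply (metis is_cbv.simps(1) rootstep.beta sred.root sred_subst)+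
    done
next
  case (head_lam M M')
  then show ?case by (auto simp: sred_Lam intro: sred.intros)
next
  case (head_app M M' N)
  from head_app.prems show ?case 
    apply (cases rule: sred_AppE)
    using head_app apply (auto intro: sred.intros simp: rootstep_iff sred_Lam)
    apply (metis is_cbv.simps(1) rootstep.beta sred.root sred_subst)+
    done
next
  case (weak_l M M' N)
  from weak_l.prems show ?case 
    apply (cases rule: sred_AppE)
    using weak_l apply (auto intro: sred.intros simp: rootstep_iff sred_val)
    done
next
  case (weak_r N N' M)
  from weak_r.prems show ?case 
    apply (cases rule: sred_AppE)
    using weak_r apply (auto intro: sred.intros simp: rootstep_iff sred_val)
    done
next
  case (left_l M M' N)
  from left_l.prems show ?case 
    apply (cases rule: sred_AppE)
    using left_l apply (auto intro: sred.intros simp: rootstep_iff sred_val)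
    done
next
  case (left_r V N N')
  from left_r.prems show ?case 
    apply (cases rule: sred_AppE)
    using left_r apply (auto intro: sred.intros simp: rootstep_iff sred_val)
    done
next
  case (right_r N N' M)
  from right_r.prems show ?case 
    apply (cases rule: sred_AppE)
    using right_r apply (auto intro: sred.intros simp: rootstep_iff sred_val)
    done
next
  case (right_l V M M')
  from right_l.prems show ?case 
    apply (cases rule: sred_AppE)
    using right_l apply (auto intro: sred.intros simp: rootstep_iff sred_val)
    done
qed

lemma step_Var[simp]: "\<not> step c (Var i) N"
  by (auto elim: step.cases simp: rootstep_iff)

lemma step_Lam: "step c (Lam t) N \<longleftrightarrow> (\<exists>t'. N = Lam t' \<and> step c t t')"
  by (auto elim: step.cases intro: step.intros simp: rootstep_iff)

lemma step_Op: "step c (Op f ts) N \<longleftrightarrow> (\<exists>xs P P' ys. ts = xs @ P # ys \<and> N = Op f (xs @ P' # ys) \<and> step c P P')"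
  apply (rule iffI)
   apply (erule step.cases)
       apply (auto simp: rootstep_iff)[4]
   apply blast
  apply (auto intro: step.intros)
  done

inductive_cases step_AppE: "step c (App s t) N"

lemma sred_step: "sred c M N \<Longrightarrow> step c M N"
  by (induction rule: sred.induct) (auto intro: step.intros)

lemma ured_step: "ured c M N \<Longrightarrow> step c M N"
  by (induction rule: ured.induct) (auto intro: step.intros sred_step)

lemma step_snormal: "step c M M' \<Longrightarrow> snormal c M \<Longrightarrow> snormal c M' \<and> knd M' = knd M"
proof (induction rule: step.induct)
  case (root M N)
  then show ?case by (auto simp: snormal_def intro: sred.root)
next
  case (appL M M' N)
  note sn = appL.prems[unfolded snormal_App]
  show ?case
  proof (cases c)
    case CbnHead then show ?thesis using sn appL.IH by (simp add: snormal_App)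
  next
    case CbvWeak then show ?thesis using sn appL.IH by (simp add: snormal_App is_val_knd)
  next
    case CbvLeft then show ?thesis using sn appL.IH by (simp add: snormal_App is_val_knd)
  next
    case CbvRight then show ?thesis using sn appL.IH by (cases "is_val N") (simp_all add: snormal_App is_val_knd)
  qed
next
  case (appR N N' M)
  note sn = appR.prems[unfolded snormal_App]
  show ?case
  proof (cases c)
    case CbnHead then show ?thesis using sn appR.IH by (simp add: snormal_App)
  next
    case CbvWeak then show ?thesis using sn appR.IH by (simp add: snormal_App is_val_knd)
  next
    case CbvLeft then show ?thesis using sn appR.IH by (cases "is_val M") (simp_all add: snormal_App is_val_knd)
  next
    case CbvRight then show ?thesis using sn appR.IH by (simp add: snormal_App is_val_knd)
  qed
next
  case (lam M M')
  then show ?case by auto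
next
  case (op M M' f xs ys)
  then show ?case by auto
qed

lemma ured_snormal: "ured c M M' \<Longrightarrow> snormal c M \<Longrightarrow> snormal c M'"
  using ured_step step_snormal by blast

lemma ured_op_idx: "i < length ts \<Longrightarrow> ured c (ts!i) u \<Longrightarrow> ured c (Op f ts) (Op f (ts[i:=u]))"
proof -
  assume i: "i < length ts" and u: "ured c (ts!i) u"
  have e1: "ts = take i ts @ ts!i # drop (Suc i) ts" using i by (simp add: id_take_nth_drop)
  have e2: "ts[i:=u] = take i ts @ u # drop (Suc i) ts" using i by (simp add: upd_conv_take_nth_drop)
  have "ured c (Op f (take i ts @ ts!i # drop (Suc i) ts)) (Op f (take i ts @ u # drop (Suc i) ts))"
    by (rule ured.op) (simp_all add: u)
  then show ?thesis using e1 e2 by metis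
qed

inductive_cases ured_LamE: "ured c (Lam t) N"
inductive_cases ured_AppE: "ured c (App s t) N"
inductive_cases ured_OpE: "ured c (Op f ts) N"

lemma ured_nonsnormal: "ured c M N \<Longrightarrow> \<not> snormal c M \<Longrightarrow> sred c M N"
  by (induction rule: ured.induct) auto

lemma ured_Lam_sn: "snormal c (Lam P) \<Longrightarrow> ured c (Lam P) N \<Longrightarrow> \<exists>P2. N = Lam P2 \<and> ured c P P2"
  by (erule ured.cases) (auto simp: snormal_def)

lemma ured_App_sn: "snormal c (App P Q) \<Longrightarrow> ured c (App P Q) N \<Longrightarrow>
   (\<exists>P2. N = App P2 Q \<and> ured c P P2) \<or> (\<exists>Q2. N = App P Q2 \<and> ured c Q Q2)"
  by (erule ured.cases) (auto simp: snormal_def)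

lemma ured_Op_inv: "ured c (Op f ts) N \<Longrightarrow> \<exists>xs P P2 ys. ts = xs @ P # ys \<and> N = Op f (xs @ P2 # ys) \<and> ured c P P2"
  by (erule ured.cases) auto

lemma ured_diamond: "ured c M M1 \<Longrightarrow> ured c M M2 \<Longrightarrow> M1 = M2 \<or> (\<exists>P. ured c M1 P \<and> ured c M2 P)"
proof (induction arbitrary: M2 rule: ured.induct)
  case (surf M M')
  then have "\<not> snormal c M" by (auto simp: snormal_def)
  with surf have "sred c M M2" by (blast intro: ured_nonsnormal)
  with sred_diamond[OF surf.hyps this] show ?case by (blast intro: ured.surf)
next
  case (lam P P')
  from ured_Lam_sn[OF lam(1) lam.prems] obtain P2 where P2: "M2 = Lam P2" "ured c P P2" by blast
  from lam.IH[OF P2(2)] show ?case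
  proof
    assume "P' = P2" then show ?thesis using P2 by simp
  next
    assume "\<exists>Q. ured c P' Q \<and> ured c P2 Q"
    then obtain Q where "ured c P' Q" "ured c P2 Q" by blast
    moreover have "snormal c (Lam P')" "snormal c (Lam P2)"
      using lam P2 ured_snormal ured.lam by blast+
    ultimately show ?thesis using P2 by (blast intro: ured.lam)
  qed
next
  case (appL P Q P')
  from ured_App_sn[OF appL(1) appL.prems] show ?case
  proof
    assume "\<exists>P2. M2 = App P2 Q \<and> ured c P P2"
    then obtain P2 where P2: "M2 = App P2 Q" "ured c P P2" by blast
    from appL.IH[OF P2(2)] show ?thesis
    proof
      assume "P' = P2" then show ?thesis using P2 by simp
    next
      assume "\<exists>R. ured c P' R \<and> ured c P2 R"
      then obtain R where "ured c P' R" "ured c P2 R" by blast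
      moreover have "snormal c (App P' Q)" "snormal c (App P2 Q)"
        using appL P2 ured_snormal ured.appL by blast+
      ultimately show ?thesis using P2 by (blast intro: ured.appL)
    qed
  next
    assume "\<exists>Q2. M2 = App P Q2 \<and> ured c Q Q2"
    then obtain Q2 where Q2: "M2 = App P Q2" "ured c Q Q2" by blast
    have "snormal c (App P' Q)" "snormal c (App P Q2)"
      using appL Q2 ured_snormal ured.appL ured.appR by blast+
    then show ?thesis using appL Q2 by (blast intro: ured.appL ured.appR)
  qed
next
  case (appR P Q Q')
  from ured_App_sn[OF appR(1) appR.prems] show ?case
  proof
    assume "\<exists>Q2. M2 = App P Q2 \<and> ured c Q Q2"
    then obtain Q2 where Q2: "M2 = App P Q2" "ured c Q Q2" by blast
    from appR.IH[OF Q2(2)] show ?thesis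
    proof
      assume "Q' = Q2" then show ?thesis using Q2 by simp
    next
      assume "\<exists>R. ured c Q' R \<and> ured c Q2 R"
      then obtain R where "ured c Q' R" "ured c Q2 R" by blast
      moreover have "snormal c (App P Q')" "snormal c (App P Q2)"
        using appR Q2 ured_snormal ured.appR by blast+
      ultimately show ?thesis using Q2 by (blast intro: ured.appR)
    qed
  next
    assume "\<exists>P2. M2 = App P2 Q \<and> ured c P P2"
    then obtain P2 where P2: "M2 = App P2 Q" "ured c P P2" by blast
    have "snormal c (App P Q')" "snormal c (App P2 Q)"
      using appR P2 ured_snormal ured.appL ured.appR by blast+
    then show ?thesis using appR P2 by (blast intro: ured.appL ured.appR)
  qed
next
  case (op f xs P ys P')
  define ts where "ts = xs @ P # ys"
  define i where "i = length xs"
  have i: "i < length ts" "ts ! i = P" "xs @ P' # ys = ts[i := P']"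
    by (simp_all add: ts_def i_def)
  from ured_Op_inv[OF op.prems] obtain xs' P2 ys' P2' where
    op2: "xs @ P # ys = xs' @ P2 # ys'" "M2 = Op f (xs' @ P2' # ys')" "ured c P2 P2'" by blast
  define j where "j = length xs'"
  have j: "j < length ts" "ts ! j = P2" "M2 = Op f (ts[j := P2'])"
    using op2 by (simp_all add: ts_def j_def)
  show ?case
  proof (cases "i = j")
    case True
    with i j have "ured c P P2'" using op2 by simp
    from op.IH[OF this] show ?thesis
    proof
      assume "P' = P2'" then show ?thesis using i j True by simp
    next
      assume "\<exists>R. ured c P' R \<and> ured c P2' R"
      then obtain R where R: "ured c P' R" "ured c P2' R" by blast
      have "ured c (Op f (ts[i := P'])) (Op f (ts[i := R]))"
        using ured_op_idx[of i "ts[i := P']" c R f] i R by simp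
      moreover have "ured c (Op f (ts[j := P2'])) (Op f (ts[j := R]))"
        using ured_op_idx[of j "ts[j := P2']" c R f] j R by simp
      ultimately show ?thesis using i j True by auto
    qed
  next
    case False
    have "ured c (Op f (ts[i := P'])) (Op f (ts[i := P', j := P2']))"
      using ured_op_idx[of j "ts[i := P']" c P2' f] i j False op2 by simp
    moreover have "ured c (Op f (ts[j := P2'])) (Op f (ts[j := P2', i := P']))"
      using ured_op_idx[of i "ts[j := P2']" c P' f] i j False op by simp
    ultimately show ?thesis using i j False by (metis list_update_swap)
  qed
qed

lemma step_ured: "step c M N \<Longrightarrow> \<exists>N'. ured c M N'"
proof (induction rule: step.induct)
  case (root M N)
  then show ?case by (blast intro: ured.surf sred.root)
next
  case (appL M M' N)
  then obtain x where x: "ured c M x" by blast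
  show ?case
  proof (cases "snormal c (App M N)")
    case True with x show ?thesis by (blast intro: ured.appL)
  next
    case False then show ?thesis by (auto simp: snormal_def intro: ured.surf)
  qed
next
  case (appR N N' M)
  then obtain x where x: "ured c N x" by blast
  show ?case
  proof (cases "snormal c (App M N)")
    case True with x show ?thesis by (blast intro: ured.appR)
  next
    case False then show ?thesis by (auto simp: snormal_def intro: ured.surf)
  qed
next
  case (lam M M')
  then obtain x where x: "ured c M x" by blast
  show ?case
  proof (cases "snormal c (Lam M)")
    case True with x show ?thesis by (blast intro: ured.lam)
  next
    case False then show ?thesis by (auto simp: snormal_def intro: ured.surf)
  qed
next
  case (op M M' f xs ys)
  then obtain x where x: "ured c M x" by blast
  show ?case using ured.op[OF _ x, of f xs ys] by auto
qed

lemma nf_equiv: "(\<nexists>N. ured c M N) \<longleftrightarrow> (\<nexists>N. step c M N)"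
  using step_ured ured_step by blast

lemma is_cbv_iff: "is_cbv c \<longleftrightarrow> c \<noteq> CbnHead"
  by (cases c) auto

inductive par :: "calc \<Rightarrow> 'o trm \<Rightarrow> 'o trm \<Rightarrow> bool" for c where
  pvar: "par c (Var i) (Var i)"
| plam: "par c t t' \<Longrightarrow> par c (Lam t) (Lam t')"
| papp: "par c s s' \<Longrightarrow> par c t t' \<Longrightarrow> par c (App s t) (App s' t')"
| pop: "list_all2 (par c) ts ts' \<Longrightarrow> par c (Op f ts) (Op f ts')"
| pbeta: "par c t t' \<Longrightarrow> par c s s' \<Longrightarrow> (is_cbv c \<longrightarrow> is_val s) \<Longrightarrow> par c (App (Lam t) s) (subst t' 0 s')"

lemma par_refl: "par c t t"
  by (induction t) (auto intro: par.intros simp: list_all2_same)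

lemma par_val: "par c v v' \<Longrightarrow> is_val v \<Longrightarrow> is_val v'"
  by (erule par.cases) auto

lemma par_lift: "par c t t' \<Longrightarrow> par c (lift k t) (lift k t')"
proof (induction arbitrary: k rule: par.induct)
  case (pop ts ts' f)
  then show ?case by (auto simp: list_all2_map1 list_all2_map2 intro!: par.pop elim!: list_all2_mono)
next
  case (pbeta t t' s s')
  then show ?case using par.pbeta[of c "lift (Suc k) t" "lift (Suc k) t'" "lift k s" "lift k s'"] by simp
qed (auto intro: par.intros)

lemma par_subst: "par c t t' \<Longrightarrow> par c s s' \<Longrightarrow> (is_cbv c \<longrightarrow> is_val s) \<Longrightarrow> par c (subst t k s) (subst t' k s')"
proof (induction arbitrary: k s s' rule: par.induct)
  case (pvar i)
  then show ?case by (auto intro: par.intros)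
next
  case (plam t t')
  have "par c (lift 0 s) (lift 0 s')" using plam.prems(1) by (rule par_lift)
  then show ?case using plam.IH[of "lift 0 s" "lift 0 s'" "Suc k"] plam.prems by (auto intro!: par.plam)
next
  case (papp a a' b b')
  then show ?case by (auto intro!: par.intros)
next
  case (pop ts ts' f)
  then show ?case by (auto simp: list_all2_map1 list_all2_map2 intro!: par.pop elim!: list_all2_mono)
next
  case (pbeta t t' b b')
  have e: "subst (subst t' 0 b') k s' = subst (subst t' (Suc k) (lift 0 s')) 0 (subst b' k s')"
    using subst_subst[of 0 k t' s' b'] by simp
  have l: "par c (lift 0 s) (lift 0 s')" using pbeta.prems(1) by (rule par_lift)
  have "par c (subst t (Suc k) (lift 0 s)) (subst t' (Suc k) (lift 0 s'))"
    using pbeta.IH(1)[OF l] pbeta.prems by simp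
  moreover have "par c (subst b k s) (subst b' k s')"
    using pbeta.IH(2) pbeta.prems by simp
  ultimately show ?case unfolding e using pbeta
    by (auto intro!: par.pbeta)
qed

inductive ipar :: "calc \<Rightarrow> 'o trm \<Rightarrow> 'o trm \<Rightarrow> bool" for c where
  ivar: "ipar c (Var i) (Var i)"
| ilam_n: "c = CbnHead \<Longrightarrow> ipar c t t' \<Longrightarrow> ipar c (Lam t) (Lam t')"
| ilam_v: "is_cbv c \<Longrightarrow> par c t t' \<Longrightarrow> ipar c (Lam t) (Lam t')"
| iop: "list_all2 (par c) ts ts' \<Longrightarrow> ipar c (Op f ts) (Op f ts')"
| iapp_n: "c = CbnHead \<Longrightarrow> ipar c s s' \<Longrightarrow> par c t t' \<Longrightarrow> ipar c (App s t) (App s' t')"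
| iapp_w: "c = CbvWeak \<Longrightarrow> ipar c s s' \<Longrightarrow> ipar c t t' \<Longrightarrow> ipar c (App s t) (App s' t')"
| iapp_lv: "c = CbvLeft \<Longrightarrow> is_val s \<Longrightarrow> ipar c s s' \<Longrightarrow> ipar c t t' \<Longrightarrow> ipar c (App s t) (App s' t')"
| iapp_ln: "c = CbvLeft \<Longrightarrow> \<not> is_val s \<Longrightarrow> ipar c s s' \<Longrightarrow> par c t t' \<Longrightarrow> ipar c (App s t) (App s' t')"
| iapp_rv: "c = CbvRight \<Longrightarrow> is_val t \<Longrightarrow> ipar c s s' \<Longrightarrow> ipar c t t' \<Longrightarrow> ipar c (App s t) (App s' t')"
| iapp_rn: "c = CbvRight \<Longrightarrow> \<not> is_val t \<Longrightarrow> par c s s' \<Longrightarrow> ipar c t t' \<Longrightarrow> ipar c (App s t) (App s' t')"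

lemma ipar_par: "ipar c t t' \<Longrightarrow> par c t t'"
  by (induction rule: ipar.induct) (auto intro: par.intros)

lemma ipar_refl: "ipar c t t"
proof (induction t)
  case (Lam t) then show ?case by (cases "c = CbnHead") (auto intro: ipar.ilam_n ipar.ilam_v par_refl simp: is_cbv_iff)
next
  case (App s t)
  show ?case
  proof (cases c)
    case CbnHead then show ?thesis using App by (intro ipar.iapp_n par_refl)
  next
    case CbvWeak then show ?thesis using App by (intro ipar.iapp_w)
  next
    case CbvLeft then show ?thesis using App
      by (cases "is_val s") (blast intro: ipar.iapp_lv ipar.iapp_ln par_refl)+
  next
    case CbvRight then show ?thesis using App
      by (cases "is_val t") (blast intro: ipar.iapp_rv ipar.iapp_rn par_refl)+
  qed
next
  case (Op f ts) show ?case by (rule ipar.iop) (simp add: list_all2_same par_refl)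
qed (auto intro: ipar.ivar)

lemma ipar_knd: "ipar c t t' \<Longrightarrow> knd t' = knd t"
  by (erule ipar.cases) auto

lemma ipar_val: "ipar c t t' \<Longrightarrow> is_val t' = is_val t"
  using ipar_knd is_val_knd by metis

lemma ipar_lift: "ipar c t t' \<Longrightarrow> ipar c (lift k t) (lift k t')"
proof (induction arbitrary: k rule: ipar.induct)
  case (iop ts ts' f)
  then show ?case by (auto simp: list_all2_map1 list_all2_map2 intro!: ipar.iop elim!: list_all2_mono par_lift)
qed (auto intro: ipar.intros par_lift)

lemma par_val_ipar: "is_cbv c \<Longrightarrow> is_val s \<Longrightarrow> par c s s' \<Longrightarrow> ipar c s s'"
  by (erule par.cases) (auto intro: ipar.intros)

lemma ipar_subst_val: "ipar c t t' \<Longrightarrow> is_cbv c \<Longrightarrow> par c s s' \<Longrightarrow> is_val s \<Longrightarrow> ipar c (subst t k s) (subst t' k s')"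
proof (induction arbitrary: k s s' rule: ipar.induct)
  case (ivar i)
  then show ?case by (auto intro: ipar.intros par_val_ipar)
next
  case (iop ts ts' f)
  then show ?case by (auto simp: list_all2_map1 list_all2_map2 intro!: ipar.iop elim!: list_all2_mono intro: par_subst)
next
  case ilam_n then show ?case by simp
next
  case ilam_v then show ?case by (auto intro!: ipar.ilam_v par_subst par_lift)
next
  case iapp_n then show ?case by simp
next
  case iapp_w then show ?case by (auto intro!: ipar.iapp_w)
next
  case iapp_lv then show ?case by (auto intro!: ipar.iapp_lv)
next
  case iapp_ln then show ?case by (auto intro!: ipar.iapp_ln par_subst)
next
  case iapp_rv then show ?case by (auto intro!: ipar.iapp_rv)
next
  case iapp_rn then show ?case by (auto intro!: ipar.iapp_rn par_subst)
qed

lemma star_map: assumes "\<And>x y. R x y \<Longrightarrow> S (f x) (f y)" and "R\<^sup>*\<^sup>* a b" shows "S\<^sup>*\<^sup>* (f a) (f b)"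
  using assms(2) by (induction rule: rtranclp_induct) (auto intro: rtranclp.rtrancl_into_rtrancl assms(1))

lemma sred_appL: "c \<noteq> CbvRight \<or> is_val t \<Longrightarrow> sred c s s' \<Longrightarrow> sred c (App s t) (App s' t)"
  by (cases c) (auto intro: sred.intros)

lemma sred_appR: "c = CbvWeak \<or> c = CbvRight \<or> (c = CbvLeft \<and> is_val s) \<Longrightarrow> sred c t t' \<Longrightarrow> sred c (App s t) (App s t')"
  by (cases c) (auto intro: sred.intros)

lemma sreds_appL: "c \<noteq> CbvRight \<or> is_val t \<Longrightarrow> (sred c)\<^sup>*\<^sup>* s s' \<Longrightarrow> (sred c)\<^sup>*\<^sup>* (App s t) (App s' t)"
  using star_map[of "sred c" "sred c" "\<lambda>x. App x t"] sred_appL by blast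

lemma sreds_appR: "c = CbvWeak \<or> c = CbvRight \<or> (c = CbvLeft \<and> is_val s) \<Longrightarrow> (sred c)\<^sup>*\<^sup>* t t' \<Longrightarrow> (sred c)\<^sup>*\<^sup>* (App s t) (App s t')"
  using star_map[of "sred c" "sred c" "\<lambda>x. App s x"] sred_appR by blast

lemma sreds_lam: "c = CbnHead \<Longrightarrow> (sred c)\<^sup>*\<^sup>* s s' \<Longrightarrow> (sred c)\<^sup>*\<^sup>* (Lam s) (Lam s')"
  using star_map[of "sred c" "sred c" "Lam"] sred.head_lam by blast

lemma sreds_lift: "(sred c)\<^sup>*\<^sup>* s s' \<Longrightarrow> (sred c)\<^sup>*\<^sup>* (lift k s) (lift k s')"
  using star_map[of "sred c" "sred c" "lift k"] sred_lift by blast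

lemma sreds_subst: "(sred c)\<^sup>*\<^sup>* t t' \<Longrightarrow> (\<not> is_cbv c \<or> is_val s) \<Longrightarrow> (sred c)\<^sup>*\<^sup>* (subst t k s) (subst t' k s)"
  using star_map[of "sred c" "sred c" "\<lambda>x. subst x k s"] sred_subst by blast

definition SP :: "calc \<Rightarrow> 'o trm \<Rightarrow> 'o trm \<Rightarrow> bool" where
  "SP c Q Q' \<longleftrightarrow> (\<exists>L. (sred c)\<^sup>*\<^sup>* Q L \<and> ipar c L Q')"

lemma SP_lift: "SP c Q Q' \<Longrightarrow> SP c (lift k Q) (lift k Q')"
  unfolding SP_def using sreds_lift ipar_lift by blast

lemma SUB_n: "ipar c A A' \<Longrightarrow> c = CbnHead \<Longrightarrow> SP c Q Q' \<Longrightarrow> par c Q Q' \<Longrightarrow> SP c (subst A k Q) (subst A' k Q')"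
proof (induction arbitrary: k Q Q' rule: ipar.induct)
  case (ivar i)
  then show ?case by (auto simp: SP_def intro: ipar.ivar)
next
  case (ilam_n t t')
  have "SP c (subst t (Suc k) (lift 0 Q)) (subst t' (Suc k) (lift 0 Q'))"
    using ilam_n by (auto intro!: ilam_n.IH SP_lift par_lift)
  then obtain L where L: "(sred c)\<^sup>*\<^sup>* (subst t (Suc k) (lift 0 Q)) L" "ipar c L (subst t' (Suc k) (lift 0 Q'))"
    unfolding SP_def by blast
  show ?case unfolding SP_def
    using sreds_lam[OF ilam_n(1) L(1)] ipar.ilam_n[OF ilam_n(1) L(2)] by auto
next
  case (iop ts ts' f)
  have "ipar c (subst (Op f ts) k Q) (subst (Op f ts') k Q')"
    using iop by (auto simp: list_all2_map1 list_all2_map2 intro!: ipar.iop elim!: list_all2_mono intro: par_subst[of CbnHead, simplified])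
  then show ?case unfolding SP_def by blast
next
  case (iapp_n s s' t t')
  from iapp_n obtain L where L: "(sred c)\<^sup>*\<^sup>* (subst s k Q) L" "ipar c L (subst s' k Q')"
    unfolding SP_def by blast
  have "par c (subst t k Q) (subst t' k Q')" using iapp_n by (auto intro: par_subst)
  then have "ipar c (App L (subst t k Q)) (subst (App s' t') k Q')"
    using L iapp_n by (auto intro: ipar.iapp_n)
  moreover have "(sred c)\<^sup>*\<^sup>* (subst (App s t) k Q) (App L (subst t k Q))"
    using sreds_appL[OF _ L(1)] iapp_n by auto
  ultimately show ?case unfolding SP_def by blast
qed (auto simp: is_cbv_iff)

lemma split: "par c M N \<Longrightarrow> SP c M N"
proof (induction rule: par.induct)
  case (pvar i)
  then show ?case unfolding SP_def by (blast intro: ipar.ivar)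
next
  case (plam t t')
  show ?case
  proof (cases "c = CbnHead")
    case True
    with plam obtain L where "(sred c)\<^sup>*\<^sup>* t L" "ipar c L t'" unfolding SP_def by blast
    then show ?thesis unfolding SP_def using True by (blast intro: sreds_lam ipar.ilam_n)
  next
    case False
    then show ?thesis unfolding SP_def using plam by (blast intro: ipar.ilam_v[of c] is_cbv_iff[THEN iffD2])
  qed
next
  case (papp s s' t t')
  from papp obtain L1 where L1: "(sred c)\<^sup>*\<^sup>* s L1" "ipar c L1 s'" unfolding SP_def by blast
  from papp obtain L2 where L2: "(sred c)\<^sup>*\<^sup>* t L2" "ipar c L2 t'" unfolding SP_def by blast
  show ?case
  proof (cases c)
    case CbnHead
    have "(sred c)\<^sup>*\<^sup>* (App s t) (App L1 t)" using sreds_appL[OF _ L1(1)] CbnHead by auto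
    moreover have "ipar c (App L1 t) (App s' t')" using CbnHead L1 papp by (auto intro: ipar.iapp_n)
    ultimately show ?thesis unfolding SP_def by blast
  next
    case CbvWeak
    have "(sred c)\<^sup>*\<^sup>* (App s t) (App L1 t)" using sreds_appL[OF _ L1(1)] CbvWeak by auto
    also have "(sred c)\<^sup>*\<^sup>* (App L1 t) (App L1 L2)" using sreds_appR[OF _ L2(1)] CbvWeak by auto
    finally have "(sred c)\<^sup>*\<^sup>* (App s t) (App L1 L2)" .
    moreover have "ipar c (App L1 L2) (App s' t')" using CbvWeak L1 L2 by (auto intro: ipar.iapp_w)
    ultimately show ?thesis unfolding SP_def by blast
  next
    case CbvLeft
    have 1: "(sred c)\<^sup>*\<^sup>* (App s t) (App L1 t)" using sreds_appL[OF _ L1(1)] CbvLeft by auto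
    show ?thesis
    proof (cases "is_val L1")
      case True
      have "(sred c)\<^sup>*\<^sup>* (App L1 t) (App L1 L2)" using sreds_appR[OF _ L2(1)] CbvLeft True by auto
      with 1 have "(sred c)\<^sup>*\<^sup>* (App s t) (App L1 L2)" by simp
      moreover have "ipar c (App L1 L2) (App s' t')" using CbvLeft L1 L2 True by (auto intro: ipar.iapp_lv)
      ultimately show ?thesis unfolding SP_def by blast
    next
      case False
      have "ipar c (App L1 t) (App s' t')" using CbvLeft L1 papp False by (auto intro: ipar.iapp_ln)
      with 1 show ?thesis unfolding SP_def by blast
    qed
  next
    case CbvRight
    have 1: "(sred c)\<^sup>*\<^sup>* (App s t) (App s L2)" using sreds_appR[OF _ L2(1)] CbvRight by auto
    show ?thesis
    proof (cases "is_val L2")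
      case True
      have "(sred c)\<^sup>*\<^sup>* (App s L2) (App L1 L2)" using sreds_appL[OF _ L1(1)] CbvRight True by auto
      with 1 have "(sred c)\<^sup>*\<^sup>* (App s t) (App L1 L2)" by simp
      moreover have "ipar c (App L1 L2) (App s' t')" using CbvRight L1 L2 True by (auto intro: ipar.iapp_rv)
      ultimately show ?thesis unfolding SP_def by blast
    next
      case False
      have "ipar c (App s L2) (App s' t')" using CbvRight L2 papp False by (auto intro: ipar.iapp_rn)
      with 1 show ?thesis unfolding SP_def by blast
    qed
  qed
next
  case (pop ts ts' f)
  then have "ipar c (Op f ts) (Op f ts')" by (auto intro!: ipar.iop elim!: list_all2_mono)
  then show ?case unfolding SP_def by blast
next
  case (pbeta t t' s s')
  have r: "sred c (App (Lam t) s) (subst t 0 s)"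
    using pbeta by (auto intro!: sred.root simp: rootstep_iff)
  from pbeta obtain L where L: "(sred c)\<^sup>*\<^sup>* t L" "ipar c L t'" unfolding SP_def by blast
  have L2: "(sred c)\<^sup>*\<^sup>* (subst t 0 s) (subst L 0 s)"
    using sreds_subst[OF L(1)] pbeta by auto
  have "SP c (subst L 0 s) (subst t' 0 s')"
  proof (cases "c = CbnHead")
    case True
    then show ?thesis using SUB_n[OF L(2) True] pbeta by blast
  next
    case False
    then show ?thesis using ipar_subst_val[OF L(2), of s s' 0] pbeta
      unfolding SP_def by (auto simp: is_cbv_iff)
  qed
  then show ?case using r L2 unfolding SP_def
    by (meson converse_rtranclp_into_rtranclp rtranclp_trans)
qed

lemma ipar_Lam_inv: "ipar c s (Lam t') \<Longrightarrow> \<exists>t. s = Lam t \<and> par c t t' \<and> (c = CbnHead \<longrightarrow> ipar c t t')"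
  by (erule ipar.cases) (auto intro: ipar_par simp: is_cbv_iff)

lemma step_par: "step c M N \<Longrightarrow> par c M N"
proof (induction rule: step.induct)
  case (root M N)
  then show ?case by (auto simp: rootstep_iff intro!: par.pbeta par_refl)
next
  case (op M M' f xs ys)
  then show ?case
    by (auto intro!: par.pop list_all2_appendI simp: list_all2_same par_refl)
qed (auto intro: par.intros par_refl)

lemma ipar_App_inv: "ipar c M (App P Q) \<Longrightarrow> \<exists>s t. M = App s t \<and> par c s P \<and> par c t Q
   \<and> ((c \<noteq> CbvRight \<or> is_val Q) \<longrightarrow> ipar c s P)
   \<and> ((c = CbvWeak \<or> c = CbvRight \<or> (c = CbvLeft \<and> is_val P)) \<longrightarrow> ipar c t Q)"
  by (erule ipar.cases) (auto intro: ipar_par simp: ipar_val)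

lemma merge: "sred c M' M'' \<Longrightarrow> ipar c M M' \<Longrightarrow> par c M M''"
proof (induction arbitrary: M rule: sred.induct)
  case (root M' M'')
  then obtain t' s' where e: "M' = App (Lam t') s'" "M'' = subst t' 0 s'" "is_cbv c \<longrightarrow> is_val s'"
    by (auto simp: rootstep_iff)
  from root.prems[unfolded e] show ?case unfolding e using e(3)
    by (cases rule: ipar.cases) (auto dest!: ipar_Lam_inv intro!: par.pbeta intro: ipar_par simp: ipar_val is_cbv_iff)
next
  case (head_lam P P')
  from ipar_Lam_inv[OF head_lam.prems] head_lam.hyps(1) obtain t where "M = Lam t" "ipar c t P" by blast
  then show ?case using head_lam.IH by (auto intro: par.plam)
next
  case (head_app P P' Q)
  from ipar_App_inv[OF head_app.prems] obtain s t where st: "M = App s t" "par c s P" "par c t Q"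
    "(c \<noteq> CbvRight \<or> is_val Q) \<longrightarrow> ipar c s P" by blast
  then show ?case using head_app.hyps head_app.IH by (auto intro!: par.papp)
next
  case (weak_l P P' Q)
  from ipar_App_inv[OF weak_l.prems] obtain s t where st: "M = App s t" "par c s P" "par c t Q"
    "(c \<noteq> CbvRight \<or> is_val Q) \<longrightarrow> ipar c s P" by blast
  then show ?case using weak_l.hyps weak_l.IH by (auto intro!: par.papp)
next
  case (weak_r Q Q' P)
  from ipar_App_inv[OF weak_r.prems] obtain s t where st: "M = App s t" "par c s P" "par c t Q"
    "((c = CbvWeak \<or> c = CbvRight \<or> (c = CbvLeft \<and> is_val P)) \<longrightarrow> ipar c t Q)" by blast
  then show ?case using weak_r.hyps weak_r.IH by (auto intro!: par.papp)
next
  case (left_l P P' Q)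
  from ipar_App_inv[OF left_l.prems] obtain s t where st: "M = App s t" "par c s P" "par c t Q"
    "(c \<noteq> CbvRight \<or> is_val Q) \<longrightarrow> ipar c s P" by blast
  then show ?case using left_l.hyps left_l.IH by (auto intro!: par.papp)
next
  case (left_r P Q Q')
  from ipar_App_inv[OF left_r.prems] obtain s t where st: "M = App s t" "par c s P" "par c t Q"
    "((c = CbvWeak \<or> c = CbvRight \<or> (c = CbvLeft \<and> is_val P)) \<longrightarrow> ipar c t Q)" by blast
  then show ?case using left_r.hyps left_r.IH by (auto intro!: par.papp)
next
  case (right_r Q Q' P)
  from ipar_App_inv[OF right_r.prems] obtain s t where st: "M = App s t" "par c s P" "par c t Q"
    "((c = CbvWeak \<or> c = CbvRight \<or> (c = CbvLeft \<and> is_val P)) \<longrightarrow> ipar c t Q)" by blast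
  then show ?case using right_r.hyps right_r.IH by (auto intro!: par.papp)
next
  case (right_l Q P P')
  from ipar_App_inv[OF right_l.prems] obtain s t where st: "M = App s t" "par c s P" "par c t Q"
    "(c \<noteq> CbvRight \<or> is_val Q) \<longrightarrow> ipar c s P" by blast
  then show ?case using right_l.hyps right_l.IH by (auto intro!: par.papp)
qed

lemma postpone: "ipar c M M' \<Longrightarrow> sred c M' M'' \<Longrightarrow> \<exists>L. (sred c)\<^sup>*\<^sup>* M L \<and> ipar c L M''"
  using merge split unfolding SP_def by blast

lemma postpone_star: "(sred c)\<^sup>*\<^sup>* M' N \<Longrightarrow> ipar c M M' \<Longrightarrow> \<exists>L. (sred c)\<^sup>*\<^sup>* M L \<and> ipar c L N"
proof (induction rule: rtranclp_induct)
  case base then show ?case by blast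
next
  case (step y z)
  then obtain L1 where "(sred c)\<^sup>*\<^sup>* M L1" "ipar c L1 y" by blast
  moreover from postpone[OF this(2) step(2)] obtain L2 where "(sred c)\<^sup>*\<^sup>* L1 L2" "ipar c L2 z" by blast
  ultimately show ?case by (meson rtranclp_trans)
qed

lemma postpone_stars: "(ipar c)\<^sup>*\<^sup>* M M' \<Longrightarrow> (sred c)\<^sup>*\<^sup>* M' N \<Longrightarrow> \<exists>L. (sred c)\<^sup>*\<^sup>* M L \<and> (ipar c)\<^sup>*\<^sup>* L N"
proof (induction arbitrary: N rule: converse_rtranclp_induct)
  case base then show ?case by blast
next
  case (step y z)
  then obtain L1 where L1: "(sred c)\<^sup>*\<^sup>* z L1" "(ipar c)\<^sup>*\<^sup>* L1 N" by blast
  from postpone_star[OF L1(1) step(1)] obtain L0 where "(sred c)\<^sup>*\<^sup>* y L0" "ipar c L0 L1" by blast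
  with L1 show ?case by (meson converse_rtranclp_into_rtranclp)
qed

lemma step_split: "step c M N \<Longrightarrow> sred c M N \<or> ipar c M N"
proof (induction rule: step.induct)
  case (root M N)
  then show ?case by (blast intro: sred.root)
next
  case (appL M M' N)
  show ?case
  proof (cases c)
    case CbnHead then show ?thesis using appL
      by (auto intro: sred.intros ipar.iapp_n par_refl)
  next
    case CbvWeak then show ?thesis using appL
      by (auto intro: sred.intros ipar.iapp_w ipar_refl)
  next
    case CbvLeft then show ?thesis using appL
      by (cases "is_val M") (auto intro: sred.intros ipar.iapp_lv ipar.iapp_ln ipar_refl par_refl)
  next
    case CbvRight then show ?thesis using appL
      by (cases "is_val N") (auto intro: sred.intros ipar.iapp_rv ipar.iapp_rn ipar_refl step_par)
  qed
next
  case (appR N N' M)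
  show ?case
  proof (cases c)
    case CbnHead then show ?thesis using appR
      by (auto intro!: ipar.iapp_n ipar_refl step_par)
  next
    case CbvWeak then show ?thesis using appR
      by (auto intro: sred.intros ipar.iapp_w ipar_refl)
  next
    case CbvLeft then show ?thesis using appR
      by (cases "is_val M") (auto intro: sred.intros ipar.iapp_lv ipar.iapp_ln ipar_refl step_par)
  next
    case CbvRight then show ?thesis using appR
      by (cases "is_val N") (auto intro: sred.intros ipar.iapp_rv ipar.iapp_rn ipar_refl par_refl)
  qed
next
  case (lam M M')
  show ?case
  proof (cases "c = CbnHead")
    case True then show ?thesis using lam by (auto intro: sred.intros ipar.ilam_n)
  next
    case False then show ?thesis using lam by (auto intro!: ipar.ilam_v step_par simp: is_cbv_iff)
  qed
next
  case (op M M' f xs ys)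
  then show ?case
    by (auto intro!: ipar.iop list_all2_appendI step_par simp: list_all2_same par_refl)
qed

lemma factor: "(step c)\<^sup>*\<^sup>* M N \<Longrightarrow> \<exists>L. (sred c)\<^sup>*\<^sup>* M L \<and> (ipar c)\<^sup>*\<^sup>* L N"
proof (induction rule: rtranclp_induct)
  case base then show ?case by blast
next
  case (step y z)
  then obtain L where L: "(sred c)\<^sup>*\<^sup>* M L" "(ipar c)\<^sup>*\<^sup>* L y" by blast
  from step_split[OF step(2)] show ?case
  proof
    assume "sred c y z"
    from postpone_stars[OF L(2)] this obtain L' where "(sred c)\<^sup>*\<^sup>* L L'" "(ipar c)\<^sup>*\<^sup>* L' z" by blast
    with L show ?thesis by (meson rtranclp_trans)
  next
    assume "ipar c y z"
    with L show ?thesis by (meson rtranclp.rtrancl_into_rtrancl)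
  qed
qed

inductive_cases ipar_AppE: "ipar c (App s t) M'"
inductive_cases ipar_LamE: "ipar c (Lam t) M'"

lemma reflect: "sred c M X \<Longrightarrow> ipar c M M' \<Longrightarrow> \<exists>Y. sred c M' Y"
proof (induction arbitrary: M' rule: sred.induct)
  case (root M N)
  then obtain a b where e: "M = App (Lam a) b" "is_cbv c \<longrightarrow> is_val b" by (auto simp: rootstep_iff)
  from root.prems[unfolded e] show ?case using e(2)
    by (cases rule: ipar_AppE) (auto elim!: ipar_LamE intro!: sred.root simp: rootstep_iff ipar_val is_cbv_iff)
next
  case (head_lam M M')
  from head_lam.prems show ?case using head_lam.hyps head_lam.IH
    by (cases rule: ipar_LamE) (auto intro: sred.head_lam)
next
  case (head_app M M' N)
  from head_app.prems show ?case using head_app.hyps head_app.IH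
    by (cases rule: ipar_AppE) (auto intro: sred.head_app)
next
  case (weak_l M M' N)
  from weak_l.prems show ?case using weak_l.hyps weak_l.IH
    by (cases rule: ipar_AppE) (auto intro: sred.weak_l)
next
  case (weak_r N N' M)
  from weak_r.prems show ?case using weak_r.hyps weak_r.IH
    by (cases rule: ipar_AppE) (auto intro: sred.weak_r)
next
  case (left_l M M' N)
  from left_l.prems show ?case using left_l.hyps left_l.IH
    by (cases rule: ipar_AppE) (auto intro: sred.left_l)
next
  case (left_r V N N')
  from left_r.prems show ?case using left_r.hyps left_r.IH
    by (cases rule: ipar_AppE) (auto simp: ipar_val; metis sred.left_r ipar_val)+
next
  case (right_r N N' M)
  from right_r.prems show ?case using right_r.hyps right_r.IH
    by (cases rule: ipar_AppE) (auto intro: sred.right_r)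
next
  case (right_l V M M')
  from right_l.prems show ?case using right_l.hyps right_l.IH
    by (cases rule: ipar_AppE) (auto simp: ipar_val; metis sred.right_l ipar_val)+
qed

lemma reflect_star: "(ipar c)\<^sup>*\<^sup>* M M' \<Longrightarrow> snormal c M' \<Longrightarrow> snormal c M"
proof (induction rule: converse_rtranclp_induct)
  case base then show ?case .
next
  case (step y z)
  then show ?case using reflect unfolding snormal_def by blast
qed

lemma op_star:
  assumes R: "\<And>xs P P' ys. R P P' \<Longrightarrow> R (Op f (xs @ P # ys)) (Op f (xs @ P' # ys))"
    and l: "list_all2 R\<^sup>*\<^sup>* ts ns"
  shows "R\<^sup>*\<^sup>* (Op f ts) (Op f ns)"
proof -
  have "\<forall>xs. R\<^sup>*\<^sup>* (Op f (xs @ ts)) (Op f (xs @ ns))"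
    using l
  proof (induction rule: list_all2_induct)
    case Nil then show ?case by simp
  next
    case (Cons t ts n ns)
    show ?case
    proof
      fix xs
      have "R\<^sup>*\<^sup>* (Op f (xs @ t # ts)) (Op f (xs @ n # ts))"
        using star_map[of R R "\<lambda>P. Op f (xs @ P # ts)", OF R Cons(1)] by blast
      also have "R\<^sup>*\<^sup>* (Op f (xs @ n # ts)) (Op f (xs @ n # ns))"
        using spec[OF Cons(3), of "xs @ [n]"] by simp
      finally show "R\<^sup>*\<^sup>* (Op f (xs @ t # ts)) (Op f (xs @ n # ns))" .
    qed
  qed
  from spec[OF this, of "[]"] show ?thesis by simp
qed

lemma steps_app: "(step c)\<^sup>*\<^sup>* s s' \<Longrightarrow> (step c)\<^sup>*\<^sup>* t t' \<Longrightarrow> (step c)\<^sup>*\<^sup>* (App s t) (App s' t')"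
proof -
  assume a: "(step c)\<^sup>*\<^sup>* s s'" and b: "(step c)\<^sup>*\<^sup>* t t'"
  have "(step c)\<^sup>*\<^sup>* (App s t) (App s' t)"
    using star_map[of "step c" "step c" "\<lambda>x. App x t", OF step.appL a] by blast
  also have "(step c)\<^sup>*\<^sup>* (App s' t) (App s' t')"
    using star_map[of "step c" "step c" "\<lambda>x. App s' x", OF step.appR b] by blast
  finally show ?thesis .
qed

lemma par_steps: "par c M N \<Longrightarrow> (step c)\<^sup>*\<^sup>* M N"
proof (induction rule: par.induct)
  case (pvar i) then show ?case by simp
next
  case (plam t t') then show ?case using star_map[of "step c" "step c" Lam, OF step.lam] by blast
next
  case (papp s s' t t') show ?case by (rule steps_app[OF papp.IH])
next
  case (pop ts ts' f)
  have "list_all2 (step c)\<^sup>*\<^sup>* ts ts'" using pop by (auto elim: list_all2_mono)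
  show ?case
    apply (rule op_star)
     apply (erule step.op)
    apply (rule \<open>list_all2 (step c)\<^sup>*\<^sup>* ts ts'\<close>)
    done
next
  case (pbeta t t' s s')
  have "(step c)\<^sup>*\<^sup>* (App (Lam t) s) (App (Lam t') s')"
    using steps_app[OF star_map[of "step c" "step c" Lam, OF step.lam pbeta.IH(1)] pbeta.IH(2)] .
  moreover have "step c (App (Lam t') s') (subst t' 0 s')"
    using pbeta by (auto intro!: step.root simp: rootstep_iff par_val)
  ultimately show ?case by (rule rtranclp.rtrancl_into_rtrancl)
qed

lemma ipars_steps: "(ipar c)\<^sup>*\<^sup>* M N \<Longrightarrow> (step c)\<^sup>*\<^sup>* M N"
  by (induction rule: rtranclp_induct) (auto dest!: ipar_par par_steps)

lemma sreds_ureds: "(sred c)\<^sup>*\<^sup>* M N \<Longrightarrow> (ured c)\<^sup>*\<^sup>* M N"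
  by (induction rule: rtranclp_induct) (auto intro: ured.surf rtranclp.rtrancl_into_rtrancl)

lemma steps_Var: "(step c)\<^sup>*\<^sup>* (Var i) X \<Longrightarrow> X = Var i"
  by (induction rule: rtranclp_induct) auto

lemma steps_Lam: "(step c)\<^sup>*\<^sup>* (Lam P) X \<Longrightarrow> \<exists>X1. X = Lam X1 \<and> (step c)\<^sup>*\<^sup>* P X1"
  by (induction rule: rtranclp_induct) (auto simp: step_Lam intro: rtranclp.rtrancl_into_rtrancl)

lemma steps_App_sn: "(step c)\<^sup>*\<^sup>* (App P Q) X \<Longrightarrow> snormal c (App P Q) \<Longrightarrow>
   \<exists>X1 X2. X = App X1 X2 \<and> (step c)\<^sup>*\<^sup>* P X1 \<and> (step c)\<^sup>*\<^sup>* Q X2 \<and> snormal c X"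
proof (induction rule: rtranclp_induct)
  case base then show ?case by blast
next
  case (step y z)
  then obtain X1 X2 where X: "y = App X1 X2" "(step c)\<^sup>*\<^sup>* P X1" "(step c)\<^sup>*\<^sup>* Q X2" "snormal c y" by blast
  have sz: "snormal c z" using step_snormal[OF step(2) X(4)] by blast
  from step(2)[unfolded X(1)] have "rootstep c (App X1 X2) z \<or> (\<exists>M'. z = App M' X2 \<and> step c X1 M') \<or> (\<exists>N'. z = App X1 N' \<and> step c X2 N')"
    by (cases rule: step_AppE) auto
  then show ?case
  proof (elim disjE exE conjE)
    assume "rootstep c (App X1 X2) z" then show ?thesis using X(4) X(1) by (auto simp: snormal_def intro: sred.root)
  next
    fix M' assume "z = App M' X2" "step c X1 M'" then show ?thesis using X sz by (auto intro: rtranclp.rtrancl_into_rtrancl)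
  next
    fix N' assume "z = App X1 N'" "step c X2 N'" then show ?thesis using X sz by (auto intro: rtranclp.rtrancl_into_rtrancl)
  qed
qed

lemma steps_Op: "(step c)\<^sup>*\<^sup>* (Op f ts) X \<Longrightarrow> \<exists>ns. X = Op f ns \<and> list_all2 (step c)\<^sup>*\<^sup>* ts ns"
proof (induction rule: rtranclp_induct)
  case base then show ?case by (auto simp: list_all2_same)
next
  case (step y z)
  then obtain ns where ns: "y = Op f ns" "list_all2 (step c)\<^sup>*\<^sup>* ts ns" by blast
  from step(2)[unfolded ns(1) step_Op] obtain xs P P' ys where
    e: "ns = xs @ P # ys" "z = Op f (xs @ P' # ys)" "step c P P'" by blast
  from ns(2)[unfolded e(1) list_all2_append2 list_all2_Cons2] obtain us p vs where
    u: "ts = us @ p # vs" "list_all2 (step c)\<^sup>*\<^sup>* us xs" "(step c)\<^sup>*\<^sup>* p P" "list_all2 (step c)\<^sup>*\<^sup>* vs ys"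
    by blast
  have "list_all2 (step c)\<^sup>*\<^sup>* ts (xs @ P' # ys)"
    using u e(3) by (auto intro!: list_all2_appendI intro: rtranclp.rtrancl_into_rtrancl)
  then show ?case using e by auto
qed

lemma ureds_lam: "(ured c)\<^sup>*\<^sup>* P P' \<Longrightarrow> snormal c (Lam P) \<Longrightarrow> (ured c)\<^sup>*\<^sup>* (Lam P) (Lam P') \<and> snormal c (Lam P')"
proof (induction rule: rtranclp_induct)
  case base then show ?case by simp
next
  case (step y z)
  then have "ured c (Lam y) (Lam z)" by (auto intro: ured.lam)
  with step show ?case by (auto intro: rtranclp.rtrancl_into_rtrancl ured_snormal)
qed

lemma ureds_appL: "(ured c)\<^sup>*\<^sup>* P P' \<Longrightarrow> snormal c (App P Q) \<Longrightarrow> (ured c)\<^sup>*\<^sup>* (App P Q) (App P' Q) \<and> snormal c (App P' Q)"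
proof (induction rule: rtranclp_induct)
  case base then show ?case by simp
next
  case (step y z)
  then have "ured c (App y Q) (App z Q)" by (auto intro: ured.appL)
  with step show ?case by (auto intro: rtranclp.rtrancl_into_rtrancl ured_snormal)
qed

lemma ureds_appR: "(ured c)\<^sup>*\<^sup>* Q Q' \<Longrightarrow> snormal c (App P Q) \<Longrightarrow> (ured c)\<^sup>*\<^sup>* (App P Q) (App P Q') \<and> snormal c (App P Q')"
proof (induction rule: rtranclp_induct)
  case base then show ?case by simp
next
  case (step y z)
  then have "ured c (App P y) (App P z)" by (auto intro: ured.appR)
  with step show ?case by (auto intro: rtranclp.rtrancl_into_rtrancl ured_snormal)
qed

definition normal :: "calc \<Rightarrow> 'o trm \<Rightarrow> bool" where
  "normal c N \<longleftrightarrow> (\<nexists>N'. step c N N')"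

lemma normal_Lam: "normal c (Lam N) \<Longrightarrow> normal c N"
  unfolding normal_def by (auto intro: step.lam)
lemma normal_App: "normal c (App A B) \<Longrightarrow> normal c A \<and> normal c B"
  unfolding normal_def by (auto intro: step.appL step.appR)
lemma normal_Op: "normal c (Op f ns) \<Longrightarrow> n \<in> set ns \<Longrightarrow> normal c n"
  unfolding normal_def by (auto dest!: split_list intro: step.op)
lemma normal_snormal: "normal c N \<Longrightarrow> snormal c N"
  unfolding normal_def snormal_def using sred_step by blast

lemma size_in_list: "n \<in> set ns \<Longrightarrow> size n < size (Op f ns)"
  by (induction ns) auto

lemma normalization: "normal c N \<Longrightarrow> (step c)\<^sup>*\<^sup>* M N \<Longrightarrow> (ured c)\<^sup>*\<^sup>* M N"
proof (induction N arbitrary: M rule: measure_induct_rule[where f=size])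
  case (less N)
  from factor[OF less.prems(2)] obtain L where L: "(sred c)\<^sup>*\<^sup>* M L" "(ipar c)\<^sup>*\<^sup>* L N" by blast
  have Ls: "snormal c L" using reflect_star[OF L(2) normal_snormal[OF less.prems(1)]] .
  have LN: "(step c)\<^sup>*\<^sup>* L N" using ipars_steps[OF L(2)] .
  have MuL: "(ured c)\<^sup>*\<^sup>* M L" using sreds_ureds[OF L(1)] .
  have "(ured c)\<^sup>*\<^sup>* L N"
  proof (cases L)
    case (Var i) then show ?thesis using steps_Var LN by auto
  next
    case (Lam P)
    from steps_Lam[OF LN[unfolded Lam]] obtain X1 where X: "N = Lam X1" "(step c)\<^sup>*\<^sup>* P X1" by blast
    have "normal c X1" using normal_Lam less.prems(1) X(1) by simp
    moreover have "size X1 < size N" using X(1) by simp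
    ultimately have "(ured c)\<^sup>*\<^sup>* P X1" using less.IH X(2) by blast
    then show ?thesis using ureds_lam[of c P X1] Ls Lam X(1) by simp
  next
    case (App P Q)
    from steps_App_sn[OF LN[unfolded App]] Ls App obtain X1 X2 where
      X: "N = App X1 X2" "(step c)\<^sup>*\<^sup>* P X1" "(step c)\<^sup>*\<^sup>* Q X2" by blast
    have n: "normal c X1" "normal c X2" using normal_App[of c X1 X2] less.prems(1) X(1) by simp_all
    have sz: "size X1 < size N" "size X2 < size N" using X(1) by simp_all
    have 1: "(ured c)\<^sup>*\<^sup>* P X1" using less.IH[OF sz(1) n(1) X(2)] .
    have 2: "(ured c)\<^sup>*\<^sup>* Q X2" using less.IH[OF sz(2) n(2) X(3)] .
    from ureds_appL[OF 1] Ls App have a: "(ured c)\<^sup>*\<^sup>* (App P Q) (App X1 Q)" "snormal c (App X1 Q)" by simp_all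
    from ureds_appR[OF 2 a(2)] have "(ured c)\<^sup>*\<^sup>* (App X1 Q) (App X1 X2)" by simp
    with a(1) show ?thesis using App X(1) by simp
  next
    case (Op f ts)
    from steps_Op[OF LN[unfolded Op]] obtain ns where X: "N = Op f ns" "list_all2 (step c)\<^sup>*\<^sup>* ts ns" by blast
    have "list_all2 (ured c)\<^sup>*\<^sup>* ts ns"
      unfolding list_all2_conv_all_nth
    proof (intro conjI allI impI)
      show "length ts = length ns" using X(2) by (simp add: list_all2_lengthD)
    next
      fix i assume a: "i < length ts"
      have l: "length ts = length ns" using X(2) by (simp add: list_all2_lengthD)
      then have m: "ns ! i \<in> set ns" using a by simp
      have st: "(step c)\<^sup>*\<^sup>* (ts ! i) (ns ! i)" using X(2) a by (simp add: list_all2_conv_all_nth)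
      have "size (ns ! i) < size N" using size_in_list[OF m] X(1) by simp
      moreover have "normal c (ns ! i)" using normal_Op[OF _ m] less.prems(1) X(1) by simp
      ultimately show "(ured c)\<^sup>*\<^sup>* (ts ! i) (ns ! i)" using less.IH st by blast
    qed
    then have "(ured c)\<^sup>*\<^sup>* (Op f ts) (Op f ns)"
      apply (rule op_star[rotated])
      apply (rule ured.op)
       apply simp
      apply assumption
      done
    then show ?thesis using X(1) Op by simp
  qed
  with MuL show ?case by (rule rtranclp_trans)
qed

theorem mainTheorem4:
  fixes c :: calc and ar :: "'o \<Rightarrow> nat"
  shows "(\<forall>M M1 M2 :: 'o trm. wf ar M \<longrightarrow> ured c M M1 \<longrightarrow> ured c M M2 \<longrightarrow>
            M1 = M2 \<or> (\<exists>P. ured c M1 P \<and> ured c M2 P))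
       \<and> (\<forall>M :: 'o trm. wf ar M \<longrightarrow> ((\<nexists>N. ured c M N) \<longleftrightarrow> (\<nexists>N. step c M N)))
       \<and> (\<forall>M N :: 'o trm. wf ar M \<longrightarrow> (\<nexists>N'. step c N N') \<longrightarrow> (step c)\<^sup>*\<^sup>* M N
            \<longrightarrow> (ured c)\<^sup>*\<^sup>* M N)"
  using ured_diamond nf_equiv normalization unfolding normal_def by blast

end
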